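(* If $X$ is a nonempty topological space and $\Omega\neq\Omega_0$ is an arbitrary topological signature (i.e., $\Omega_n\neq\emptyset$ for some $n\ge1$), then the free Stone topological algebra $\overline{\Omega}_X\mathcal{S}t_\Omega$ is not profinite.
   Context: $\Omega=\biguplus_n\Omega_n$ is a topological signature. A Stone topological $\Omega$-algebra is a compact Hausdorff 0-dimensional space $A$ with continuous evaluation maps $\Omega_n\times A^n\to A$; $\mathcal{S}t_\Omega$ is the class of all of them. $\overline{\Omega}_X\mathcal{S}t_\Omega$ is the free Stone topological algebra over $X$: a Stone topological $\Omega$-algebra with a continuous map $\iota$ from $X$ whose image generates a dense subalgebra, such that every continuous map from $X$ into a Stone topological $\Omega$-algebra $T$ factors uniquely as $\hat\varphi\circ\iota$ with $\hat\varphi$ a continuous homomorphism. A topological algebra is profinite if it is compact and any two distinct elements are separated by a continuous homomorphism into a finite discrete $\Omega$-algebra. *)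

theory Defs
  imports "HOL-Analysis.Analysis"
begin

text \<open>A topological signature is a family Om of topological spaces indexed by arities:
  Om n is the space of n-ary operation symbols (Omega_n); Omega is their disjoint union.
  An Omega-algebra on a topology T (carrier = topspace T) is given by an evaluation
  ev n f xs for f in Omega_n and xs in A^n, where A^n is the product space
  product_topology (\<lambda>_. T) {..<n} (tuples are extensional functions on {..<n}).\<close>

definition top_algebra ::
  "(nat \<Rightarrow> 'o topology) \<Rightarrow> 'a topology \<Rightarrow> (nat \<Rightarrow> 'o \<Rightarrow> (nat \<Rightarrow> 'a) \<Rightarrow> 'a) \<Rightarrow> bool" where
  "top_algebra Om T ev \<longleftrightarrow>
     (\<forall>n. continuous_map (prod_topology (Om n) (product_topology (\<lambda>_. T) {..<n})) T
            (\<lambda>(f, xs). ev n f xs))"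

definition stone_space :: "'a topology \<Rightarrow> bool" where
  "stone_space T \<longleftrightarrow> compact_space T \<and> Hausdorff_space T \<and> T dim_le 0"

definition stone_algebra ::
  "(nat \<Rightarrow> 'o topology) \<Rightarrow> 'a topology \<Rightarrow> (nat \<Rightarrow> 'o \<Rightarrow> (nat \<Rightarrow> 'a) \<Rightarrow> 'a) \<Rightarrow> bool" where
  "stone_algebra Om T ev \<longleftrightarrow> stone_space T \<and> top_algebra Om T ev"

definition is_hom ::
  "(nat \<Rightarrow> 'o topology) \<Rightarrow> 'a set \<Rightarrow> (nat \<Rightarrow> 'o \<Rightarrow> (nat \<Rightarrow> 'a) \<Rightarrow> 'a)
     \<Rightarrow> 'b set \<Rightarrow> (nat \<Rightarrow> 'o \<Rightarrow> (nat \<Rightarrow> 'b) \<Rightarrow> 'b) \<Rightarrow> ('a \<Rightarrow> 'b) \<Rightarrow> bool" where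
  "is_hom Om A evA B evB h \<longleftrightarrow>
     h ` A \<subseteq> B \<and>
     (\<forall>n. \<forall>f \<in> topspace (Om n). \<forall>xs \<in> PiE {..<n} (\<lambda>_. A).
        h (evA n f xs) = evB n f (\<lambda>i\<in>{..<n}. h (xs i)))"

definition cont_hom ::
  "(nat \<Rightarrow> 'o topology) \<Rightarrow> 'a topology \<Rightarrow> (nat \<Rightarrow> 'o \<Rightarrow> (nat \<Rightarrow> 'a) \<Rightarrow> 'a)
     \<Rightarrow> 'b topology \<Rightarrow> (nat \<Rightarrow> 'o \<Rightarrow> (nat \<Rightarrow> 'b) \<Rightarrow> 'b) \<Rightarrow> ('a \<Rightarrow> 'b) \<Rightarrow> bool" where
  "cont_hom Om TA evA TB evB h \<longleftrightarrow>
     continuous_map TA TB h \<and> is_hom Om (topspace TA) evA (topspace TB) evB h"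

definition is_subalgebra ::
  "(nat \<Rightarrow> 'o topology) \<Rightarrow> 'a set \<Rightarrow> (nat \<Rightarrow> 'o \<Rightarrow> (nat \<Rightarrow> 'a) \<Rightarrow> 'a) \<Rightarrow> 'a set \<Rightarrow> bool" where
  "is_subalgebra Om A ev S \<longleftrightarrow>
     S \<subseteq> A \<and> (\<forall>n. \<forall>f \<in> topspace (Om n). \<forall>xs \<in> PiE {..<n} (\<lambda>_. S). ev n f xs \<in> S)"

definition generated_subalgebra ::
  "(nat \<Rightarrow> 'o topology) \<Rightarrow> 'a set \<Rightarrow> (nat \<Rightarrow> 'o \<Rightarrow> (nat \<Rightarrow> 'a) \<Rightarrow> 'a) \<Rightarrow> 'a set \<Rightarrow> 'a set" where
  "generated_subalgebra Om A ev G = \<Inter> {S. is_subalgebra Om A ev S \<and> G \<subseteq> S}"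

text \<open>The universal property is required for all
  Stone topological algebras whose carrier lies in the type ('x + 'o) list set set.
  (Every continuous map into a Stone algebra factors through the closed subalgebra generated
  by its image, which has a dense subset of cardinality at most |('x+'o) list| and hence
  cardinality at most 2^2^|('x+'o) list|; so this is equivalent to the universal property
  with respect to all Stone topological algebras.)  Uniqueness is up to equality on the carrier.\<close>

definition free_stone_algebra ::
  "(nat \<Rightarrow> 'o topology) \<Rightarrow> 'x topology \<Rightarrow> 'a topology \<Rightarrow> (nat \<Rightarrow> 'o \<Rightarrow> (nat \<Rightarrow> 'a) \<Rightarrow> 'a)
     \<Rightarrow> ('x \<Rightarrow> 'a) \<Rightarrow> bool" where
  "free_stone_algebra Om X F evF \<iota> \<longleftrightarrow>
     stone_algebra Om F evF \<and>
     continuous_map X F \<iota> \<and>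
     F closure_of (generated_subalgebra Om (topspace F) evF (\<iota> ` topspace X)) = topspace F \<and>
     (\<forall>(T :: ('x + 'o) list set set topology) evT \<phi>.
        stone_algebra Om T evT \<and> continuous_map X T \<phi> \<longrightarrow>
        (\<exists>h. cont_hom Om F evF T evT h \<and> (\<forall>x \<in> topspace X. h (\<iota> x) = \<phi> x) \<and>
             (\<forall>h'. cont_hom Om F evF T evT h' \<and> (\<forall>x \<in> topspace X. h' (\<iota> x) = \<phi> x)
                   \<longrightarrow> (\<forall>y \<in> topspace F. h' y = h y))))"

text \<open>Profinite: compact, and distinct elements are separated by a continuous homomorphism
  into a finite discrete topological Omega-algebra (finite algebras taken, w.l.o.g., on nat).\<close>

definition profinite_algebra ::
  "(nat \<Rightarrow> 'o topology) \<Rightarrow> 'a topology \<Rightarrow> (nat \<Rightarrow> 'o \<Rightarrow> (nat \<Rightarrow> 'a) \<Rightarrow> 'a) \<Rightarrow> bool" where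
  "profinite_algebra Om T ev \<longleftrightarrow>
     top_algebra Om T ev \<and> compact_space T \<and>
     (\<forall>a \<in> topspace T. \<forall>b \<in> topspace T. a \<noteq> b \<longrightarrow>
        (\<exists>(B :: nat set) evB h. finite B \<and> top_algebra Om (discrete_topology B) evB \<and>
           cont_hom Om T ev (discrete_topology B) evB h \<and> h a \<noteq> h b))"

end

theory Submission
  imports Defs
begin

abbreviation cantor :: "(nat \<Rightarrow> bool) topology" where
  "cantor \<equiv> product_topology (\<lambda>_. discrete_topology (UNIV::bool set)) (UNIV::nat set)"

lemma topspace_cantor [simp]: "topspace cantor = UNIV"
  by (auto simp: PiE_def extensional_def)

lemma stone_cantor: "stone_space cantor"
proof -
  have c: "compact_space cantor"
    by (simp add: compact_space_product_topology compact_space_discrete_topology)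
  have h: "Hausdorff_space cantor"
    by (simp add: Hausdorff_space_product_topology)
  have "neighbourhood_base_of (\<lambda>U. closedin cantor U \<and> openin cantor U) cantor"
    unfolding neighbourhood_base_of
  proof (intro allI impI)
    fix W x assume "openin cantor W \<and> x \<in> W"
    then obtain U where U: "finite {i. U i \<noteq> UNIV}" "x \<in> PiE UNIV U" "PiE UNIV U \<subseteq> W"
      unfolding openin_product_topology_alt by auto
    have o: "openin cantor (PiE UNIV U)"
      using U(1) by (simp add: openin_PiE_gen)
    have cl: "closedin cantor (PiE UNIV U)"
      by (simp add: closedin_product_topology)
    show "\<exists>U' V. openin cantor U' \<and> (closedin cantor V \<and> openin cantor V) \<and> x \<in> U' \<and> U' \<subseteq> V \<and> V \<subseteq> W"
      using o cl U by blast
  qed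
  then have "cantor dim_le 0"
    by (simp add: dimension_le_0_neighbourhood_base_of_clopen)
  then show ?thesis using c h by (simp add: stone_space_def)
qed

lemma shift_cont: "continuous_map cantor cantor (\<lambda>x i. x (Suc i))"
  unfolding continuous_map_componentwise_UNIV
  by (auto intro: continuous_map_product_projection)

lemma coord_closed: "closedin cantor {x. x m = b}"
proof -
  have "closedin cantor {x \<in> topspace cantor. x m \<in> {b}}"
    by (rule closedin_continuous_map_preimage[OF continuous_map_product_projection]) auto
  then show ?thesis by simp
qed

lemma pullback_homeo:
  assumes "\<And>x. dec (enc x) = x"
  shows "homeomorphic_maps (pullback_topology (range enc) dec cantor) cantor dec enc"
  unfolding homeomorphic_maps_def
proof (intro conjI)
  show "continuous_map (pullback_topology (range enc) dec cantor) cantor dec"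
    using continuous_map_pullback[OF continuous_map_id, of "range enc" dec] by (simp add: o_def)
  show "continuous_map cantor (pullback_topology (range enc) dec cantor) enc"
    unfolding continuous_map_def
  proof (intro conjI allI impI Pi_I)
    show "enc x \<in> topspace (pullback_topology (range enc) dec cantor)" for x
      by (auto simp: topspace_pullback_topology)
    fix U assume "openin (pullback_topology (range enc) dec cantor) U"
    then obtain V where V: "openin cantor V" "U = dec -` V \<inter> range enc"
      by (auto simp: openin_pullback_topology)
    have "{x \<in> topspace cantor. enc x \<in> U} = V" using V(2) assms by auto
    then show "openin cantor {x \<in> topspace cantor. enc x \<in> U}" using V(1) by simp
  qed
  show "\<forall>x\<in>topspace (pullback_topology (range enc) dec cantor). enc (dec x) = x"
    using assms by (auto simp: topspace_pullback_topology)
  show "\<forall>y\<in>topspace cantor. dec (enc y) = y" using assms by auto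
qed

lemma stone_homeo:
  assumes "homeomorphic_maps T cantor d e"
  shows "stone_space T"
proof -
  have hs: "T homeomorphic_space cantor" using assms homeomorphic_space_def by blast
  then show ?thesis using stone_cantor
    by (simp add: stone_space_def homeomorphic_compact_space homeomorphic_Hausdorff_space
        homeomorphic_space_dimension_le)
qed

lemma cluster:
  fixes s :: "nat \<Rightarrow> 'a"
  assumes "compact_space F" "\<And>i. s i \<in> topspace F"
  shows "\<exists>z\<in>topspace F. \<forall>J. z \<in> F closure_of (s ` {J..})"
proof -
  define C where "C J = F closure_of (s ` {J..})" for J
  have 1: "closedin F (C J)" for J by (simp add: C_def)
  have 2: "C J \<noteq> {}" for J
    proof -
      have "s J \<in> C J"
        proof -
          have sub: "s ` {J..} \<subseteq> topspace F" using assms(2) by auto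
          show ?thesis using closure_of_subset[OF sub] unfolding C_def by auto
        qed
      then show ?thesis by auto
    qed
  have 3: "decseq C" unfolding decseq_def C_def
      by (auto intro!: closure_of_mono)
  have "(\<Inter>J. C J) \<noteq> {}" using compact_space_imp_nest[OF assms(1), of C] 1 2 3 by blast
  then obtain z where z: "\<forall>J. z \<in> C J" by auto
  then have "z \<in> topspace F" using closure_of_subset_topspace unfolding C_def by (meson in_mono)
  then show ?thesis using z C_def by auto
qed

lemma cluster_prop:
  fixes s :: "nat \<Rightarrow> 'a"
  assumes "z \<in> F closure_of (s ` {J..})" "\<And>i. i \<ge> J \<Longrightarrow> s i \<in> S" "closedin F S"
  shows "z \<in> S"
  using closure_of_minimal[OF _ assms(3), of "s ` {J..}"] assms(1,2) by auto

lemma fin_period: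
  fixes g :: "'a \<Rightarrow> 'a"
  assumes "finite B" "\<And>m. (g ^^ m) \<beta> \<in> B" "card B \<le> m" "m \<le> m'" "fact (card B) dvd (m' - m)"
  shows "(g ^^ m') \<beta> = (g ^^ m) \<beta>"
proof -
  let ?N = "card B"
  have "\<not> inj_on (\<lambda>m. (g ^^ m) \<beta>) {0..?N}"
  proof
    assume "inj_on (\<lambda>m. (g ^^ m) \<beta>) {0..?N}"
    from card_inj_on_le[OF this _ assms(1)] assms(2) show False by auto
  qed
  then obtain p q where pq: "p < q" "q \<le> ?N" "(g ^^ p) \<beta> = (g ^^ q) \<beta>"
    unfolding inj_on_def by (metis atLeastAtMost_iff linorder_neqE_nat)
  define d where "d = q - p"
  have d: "d \<ge> 1" "d \<le> ?N" using pq d_def by auto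
  have step: "(g ^^ (k + d)) \<beta> = (g ^^ k) \<beta>" if "p \<le> k" for k
  proof -
    have e: "k + d = (k - p) + q" using that pq by (simp add: d_def)
    have "(g ^^ (k + d)) \<beta> = (g ^^ (k - p)) ((g ^^ q) \<beta>)"
      unfolding e funpow_add by simp
    also have "\<dots> = (g ^^ (k - p)) ((g ^^ p) \<beta>)" using pq by simp
    also have "\<dots> = (g ^^ ((k - p) + p)) \<beta>" unfolding funpow_add by simp
    also have "\<dots> = (g ^^ k) \<beta>" using that by simp
    finally show ?thesis .
  qed
  have iter: "(g ^^ (k + t * d)) \<beta> = (g ^^ k) \<beta>" if "p \<le> k" for k t
  proof (induction t)
    case 0 then show ?case by simp
  next
    case (Suc t)
    have "(g ^^ (k + Suc t * d)) \<beta> = (g ^^ ((k + t * d) + d)) \<beta>" by (simp add: algebra_simps)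
    also have "\<dots> = (g ^^ (k + t * d)) \<beta>" using step that by simp
    finally show ?case using Suc by simp
  qed
  have "d dvd fact ?N" using d by (simp add: dvd_fact)
  then have "d dvd (m' - m)" using assms(5) dvd_trans by blast
  then obtain t where t: "m' - m = d * t" by (auto elim: dvdE)
  have "m' = m + t * d" using t assms(4) by (simp add: algebra_simps)
  then show ?thesis using iter[of m t] pq assms(3) by simp
qed

lemma not_fact_sum:
  assumes "j \<le> i" "2 \<le> i"
  shows "\<not> (\<exists>k. fact i + fact j = (fact k :: nat))"
proof
  assume "\<exists>k. fact i + fact j = (fact k :: nat)"
  then obtain k where k: "fact i + fact j = (fact k :: nat)" by blast
  have f1: "(fact j :: nat) \<le> fact i" using assms(1) by (simp add: fact_mono)
  have f0: "(fact j :: nat) > 0" by simp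
  have "(fact (Suc i) :: nat) = Suc i * fact i" by simp
  have "1 * (fact i::nat) < i * fact i" using assms(2) by (intro mult_strict_right_mono) auto
  then have "fact j < i * (fact i::nat)" using f1 by linarith
  then have up: "fact i + fact j < (fact (Suc i) :: nat)" by simp
  show False
  proof (cases "k \<le> i")
    case True
    then have "(fact k :: nat) \<le> fact i" by (simp add: fact_mono)
    then show False using k f0 by simp
  next
    case False
    then have "(fact (Suc i) :: nat) \<le> fact k" by (intro fact_mono) auto
    then show False using k up by simp
  qed
qed


lemma ev_closed:
  assumes "top_algebra Om T ev" "f \<in> topspace (Om n)" "y \<in> topspace T"
  shows "ev n f (\<lambda>i\<in>{..<n}. y) \<in> topspace T"
proof -
  have cm: "continuous_map (prod_topology (Om n) (product_topology (\<lambda>_. T) {..<n})) T (\<lambda>(f, xs). ev n f xs)"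
    using assms(1) unfolding top_algebra_def by blast
  have "(f, (\<lambda>i\<in>{..<n}. y)) \<in> topspace (prod_topology (Om n) (product_topology (\<lambda>_. T) {..<n}))"
    using assms(2,3) by (auto simp: topspace_prod_topology)
  with continuous_map_image_subset_topspace[OF cm]
  have "(\<lambda>(f, xs). ev n f xs) (f, (\<lambda>i\<in>{..<n}. y)) \<in> topspace T" by blast
  then show ?thesis by (simp only: case_prod_conv)
qed

lemma hom_u:
  assumes "is_hom Om A evA B evB h" "f \<in> topspace (Om n)" "y \<in> A"
  shows "h (evA n f (\<lambda>i\<in>{..<n}. y)) = evB n f (\<lambda>i\<in>{..<n}. h y)"
proof -
  have "(\<lambda>i\<in>{..<n}. y) \<in> PiE {..<n} (\<lambda>_. A)" using assms(3) by auto
  then have "h (evA n f (\<lambda>i\<in>{..<n}. y)) = evB n f (\<lambda>i\<in>{..<n}. h ((\<lambda>i\<in>{..<n}. y) i))"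
    using assms(1,2) unfolding is_hom_def by blast
  also have "(\<lambda>i\<in>{..<n}. h ((\<lambda>i\<in>{..<n}. y) i)) = (\<lambda>i\<in>{..<n}. h y)"
    by (rule restrict_ext) simp
  finally show ?thesis .
qed

lemma iter_closed:
  assumes "\<And>y. y \<in> A \<Longrightarrow> g y \<in> A" "y \<in> A"
  shows "(g ^^ m) y \<in> A"
  by (induction m) (use assms in auto)

lemma hom_iter:
  assumes "is_hom Om A evA B evB h" "f \<in> topspace (Om n)" "y \<in> A"
    "\<And>y. y \<in> A \<Longrightarrow> evA n f (\<lambda>i\<in>{..<n}. y) \<in> A"
  shows "h (((\<lambda>y. evA n f (\<lambda>i\<in>{..<n}. y)) ^^ m) y) = ((\<lambda>y. evB n f (\<lambda>i\<in>{..<n}. y)) ^^ m) (h y)"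
proof (induction m)
  case 0 then show ?case by simp
next
  case (Suc m)
  have mem: "((\<lambda>y. evA n f (\<lambda>i\<in>{..<n}. y)) ^^ m) y \<in> A"
    by (rule iter_closed[OF assms(4) assms(3)])
  let ?gA = "\<lambda>y. evA n f (\<lambda>i\<in>{..<n}. y)"
  let ?gB = "\<lambda>y. evB n f (\<lambda>i\<in>{..<n}. y)"
  have "h ((?gA ^^ Suc m) y) = h (?gA ((?gA ^^ m) y))" by (simp only: funpow.simps comp_apply)
  also have "\<dots> = ?gB (h ((?gA ^^ m) y))" by (rule hom_u[OF assms(1,2) mem])
  also have "\<dots> = ?gB ((?gB ^^ m) (h y))" by (simp only: Suc.IH)
  also have "\<dots> = (?gB ^^ Suc m) (h y)" by (simp only: funpow.simps comp_apply)
  finally show ?case .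
qed

theorem theorem4p18:
  fixes Om :: "nat \<Rightarrow> 'o topology" and X :: "'x topology"
    and F :: "'a topology" and evF :: "nat \<Rightarrow> 'o \<Rightarrow> (nat \<Rightarrow> 'a) \<Rightarrow> 'a" and \<iota> :: "'x \<Rightarrow> 'a"
  assumes "topspace X \<noteq> {}"
    and "\<exists>n\<ge>1. topspace (Om n) \<noteq> {}"
    and "free_stone_algebra Om X F evF \<iota>"
  shows "\<not> profinite_algebra Om F evF"
proof
  assume prof: "profinite_algebra Om F evF"
  obtain x0 where x0: "x0 \<in> topspace X" using assms(1) by blast
  obtain n f0 where n: "n \<ge> 1" "f0 \<in> topspace (Om n)" using assms(2) by blast
  have stF: "stone_algebra Om F evF" and ciota: "continuous_map X F \<iota>"
    using assms(3) unfolding free_stone_algebra_def by blast+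
  have taF: "top_algebra Om F evF" and compF: "compact_space F"
    using stF unfolding stone_algebra_def stone_space_def by blast+
  define u where "u y = evF n f0 (\<lambda>i\<in>{..<n}. y)" for y
  have uF: "u y \<in> topspace F" if "y \<in> topspace F" for y
    unfolding u_def by (rule ev_closed[OF taF n(2) that])
  have uiF: "(u ^^ m) y \<in> topspace F" if "y \<in> topspace F" for y m
    by (rule iter_closed[OF uF that])
  have a: "\<iota> x0 \<in> topspace F" using continuous_map_image_subset_topspace[OF ciota] x0 by blast
  define a0 where "a0 = \<iota> x0"
  define enc :: "(nat \<Rightarrow> bool) \<Rightarrow> ('x + 'o) list set set"
    where "enc x = (\<lambda>i. {replicate i (undefined::'x + 'o)}) ` {i. x i}" for x
  define dec :: "('x + 'o) list set set \<Rightarrow> nat \<Rightarrow> bool"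
    where "dec S i = ({replicate i (undefined::'x + 'o)} \<in> S)" for S i
  have de: "dec (enc x) = x" for x
    unfolding enc_def dec_def by (auto simp: fun_eq_iff)
  define T where "T = pullback_topology (range enc) dec cantor"
  have hm: "homeomorphic_maps T cantor dec enc"
    unfolding T_def by (rule pullback_homeo[OF de])
  have stT: "stone_space T" by (rule stone_homeo[OF hm])
  have topT: "topspace T = range enc"
    by (simp add: T_def topspace_pullback_topology)
  have cdec: "continuous_map T cantor dec" and cenc: "continuous_map cantor T enc"
    using hm unfolding homeomorphic_maps_def by blast+
  define sh :: "(nat \<Rightarrow> bool) \<Rightarrow> nat \<Rightarrow> bool" where "sh x = (\<lambda>i. x (Suc i))" for x
  have csh: "continuous_map cantor cantor sh"
  proof -
    have "sh = (\<lambda>x i. x (Suc i))" by (simp add: sh_def fun_eq_iff)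
    then show ?thesis using shift_cont by simp
  qed
  define evT :: "nat \<Rightarrow> 'o \<Rightarrow> (nat \<Rightarrow> ('x + 'o) list set set) \<Rightarrow> ('x + 'o) list set set"
    where "evT m f xs = enc (sh (dec (xs 0)))" for m f xs
  have cT: "continuous_map T T (enc \<circ> sh \<circ> dec)"
    by (rule continuous_map_compose[OF cdec continuous_map_compose[OF csh cenc]])
  have taT: "top_algebra Om T evT"
    unfolding top_algebra_def
  proof
    fix m
    show "continuous_map (prod_topology (Om m) (product_topology (\<lambda>_. T) {..<m})) T (\<lambda>(f, xs). evT m f xs)"
    proof (cases "m = 0")
      case True
      have "enc (sh (dec undefined)) \<in> topspace T" by (simp only: topT) (rule rangeI)
      then have "continuous_map (prod_topology (Om m) (product_topology (\<lambda>_. T) {..<m})) T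
              (\<lambda>_. enc (sh (dec undefined)))"
        by (rule continuous_map_const[THEN iffD2, OF disjI2])
      then show ?thesis
      proof (rule continuous_map_eq)
        fix x assume x: "x \<in> topspace (prod_topology (Om m) (product_topology (\<lambda>_. T) {..<m}))"
        obtain f xs where fx: "x = (f, xs)" by fastforce
        have "xs \<in> PiE {..<m} (\<lambda>_. topspace T)" using x fx by (simp add: topspace_prod_topology)
        then have "xs 0 = undefined" using True by (simp add: PiE_def extensional_def)
        then show "enc (sh (dec undefined)) = (\<lambda>(f, xs). evT m f xs) x"
          using fx by (simp add: evT_def)
      qed
    next
      case False
      have p: "continuous_map (product_topology (\<lambda>_. T) {..<m}) T (\<lambda>xs. xs 0)"
        using continuous_map_product_projection[of 0 "{..<m}" "\<lambda>_. T"] False by simp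
      have "continuous_map (prod_topology (Om m) (product_topology (\<lambda>_. T) {..<m})) T
               ((enc \<circ> sh \<circ> dec) \<circ> (\<lambda>xs. xs 0) \<circ> snd)"
        by (rule continuous_map_compose[OF continuous_map_snd continuous_map_compose[OF p cT]])
      moreover have "((enc \<circ> sh \<circ> dec) \<circ> (\<lambda>xs. xs 0) \<circ> snd) = (\<lambda>(f, xs). evT m f xs)"
        by (auto simp: evT_def fun_eq_iff)
      ultimately show ?thesis by simp
    qed
  qed
  have saT: "stone_algebra Om T evT" using stT taT by (simp add: stone_algebra_def)
  define c :: "nat \<Rightarrow> bool" where "c k = (\<exists>i. k = fact i)" for k
  have cphi: "continuous_map X T (\<lambda>_. enc c)" by (simp add: topT)
  have UP: "\<forall>(T' :: ('x + 'o) list set set topology) evT' \<phi>.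
        stone_algebra Om T' evT' \<and> continuous_map X T' \<phi> \<longrightarrow>
        (\<exists>h. cont_hom Om F evF T' evT' h \<and> (\<forall>x \<in> topspace X. h (\<iota> x) = \<phi> x) \<and>
             (\<forall>h'. cont_hom Om F evF T' evT' h' \<and> (\<forall>x \<in> topspace X. h' (\<iota> x) = \<phi> x)
                   \<longrightarrow> (\<forall>y \<in> topspace F. h' y = h y)))"
    using assms(3) unfolding free_stone_algebra_def by (elim conjE) assumption
  obtain h where h: "cont_hom Om F evF T evT h" and h0: "\<forall>x\<in>topspace X. h (\<iota> x) = enc c"
    using UP[rule_format, OF conjI[OF saT cphi]] by (elim exE conjE)
  have hhom: "is_hom Om (topspace F) evF (topspace T) evT h" and hc: "continuous_map F T h"
    using h unfolding cont_hom_def by blast+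
  have ha: "h a0 = enc c" using h0 x0 a0_def by blast
  have hu: "dec (h (u y)) = sh (dec (h y))" if "y \<in> topspace F" for y
  proof -
    have "h (u y) = evT n f0 (\<lambda>i\<in>{..<n}. h y)"
      unfolding u_def by (rule hom_u[OF hhom n(2) that])
    also have "\<dots> = enc (sh (dec (h y)))" using n(1) by (simp add: evT_def)
    finally show ?thesis by (simp add: de)
  qed
  have dh: "dec (h ((u ^^ m) y)) = (\<lambda>k. dec (h y) (k + m))" if yF: "y \<in> topspace F" for y m
  proof (induction m)
    case 0 then show ?case by simp
  next
    case (Suc m)
    have "dec (h ((u ^^ Suc m) y)) = dec (h (u ((u ^^ m) y)))" by (simp only: funpow.simps comp_apply)
    also have "\<dots> = sh (dec (h ((u ^^ m) y)))" by (rule hu[OF uiF[OF yF]])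
    also have "\<dots> = sh (\<lambda>k. dec (h y) (k + m))" by (simp only: Suc.IH)
    also have "\<dots> = (\<lambda>k. dec (h y) (k + Suc m))" by (simp add: sh_def)
    finally show ?case .
  qed
  have dha: "dec (h a0) = c" using ha de by simp
  have cdh: "continuous_map F cantor (dec \<circ> h)" by (rule continuous_map_compose[OF hc cdec])
  have clo: "closedin F {y \<in> topspace F. dec (h y) m = b}" for m b
    using closedin_continuous_map_preimage[OF cdh coord_closed[of m b]] by simp
  define s1 where "s1 i = (u ^^ fact i) a0" for i
  have s1F: "s1 i \<in> topspace F" for i unfolding s1_def a0_def by (rule uiF[OF a])
  obtain a1 where a1: "a1 \<in> topspace F" "\<forall>J. a1 \<in> F closure_of (s1 ` {J..})"
  proof -
    have "\<exists>z\<in>topspace F. \<forall>J. z \<in> F closure_of (s1 ` {J..})"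
      by (rule cluster[where s=s1]) (rule compF, rule s1F)
    then show ?thesis by (elim bexE) (rule that)
  qed
  define s2 where "s2 i = (u ^^ fact i) a1" for i
  have s2F: "s2 i \<in> topspace F" for i unfolding s2_def by (rule uiF[OF a1(1)])
  obtain a2 where a2: "a2 \<in> topspace F" "\<forall>J. a2 \<in> F closure_of (s2 ` {J..})"
  proof -
    have "\<exists>z\<in>topspace F. \<forall>J. z \<in> F closure_of (s2 ` {J..})"
      by (rule cluster[where s=s2]) (rule compF, rule s2F)
    then show ?thesis by (elim bexE) (rule that)
  qed
  have A: "a1 \<in> {y \<in> topspace F. dec (h y) 0 = True}"
  proof (rule cluster_prop[OF a1(2)[rule_format, of 0] _ clo])
    fix i show "s1 i \<in> {y \<in> topspace F. dec (h y) 0 = True}"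
      using s1F dh[of a0 "fact i"] a a0_def dha by (auto simp: s1_def c_def)
  qed
  have Bj: "a1 \<in> {y \<in> topspace F. dec (h y) (fact j) = False}" if "j \<ge> 2" for j
  proof (rule cluster_prop[OF a1(2)[rule_format, of j] _ clo])
    fix i assume "i \<ge> j"
    then have "\<not> (\<exists>k. fact i + fact j = (fact k :: nat))" using not_fact_sum that by auto
    then show "s1 i \<in> {y \<in> topspace F. dec (h y) (fact j) = False}"
      using s1F dh[of a0 "fact i"] a a0_def dha by (auto simp: s1_def c_def add.commute)
  qed
  have C: "a2 \<in> {y \<in> topspace F. dec (h y) 0 = False}"
  proof (rule cluster_prop[OF a2(2)[rule_format, of 2] _ clo])
    fix i :: nat assume "i \<ge> 2"
    then show "s2 i \<in> {y \<in> topspace F. dec (h y) 0 = False}"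
      using s2F dh[OF a1(1), of "fact i"] Bj[of i] by (auto simp: s2_def)
  qed
  have ne: "a1 \<noteq> a2" using A C by auto
  obtain B evB k where B: "finite (B :: nat set)" "top_algebra Om (discrete_topology B) evB"
    "cont_hom Om F evF (discrete_topology B) evB k" "k a1 \<noteq> k a2"
  proof -
    have P: "\<forall>a \<in> topspace F. \<forall>b \<in> topspace F. a \<noteq> b \<longrightarrow>
        (\<exists>(B :: nat set) evB h. finite B \<and> top_algebra Om (discrete_topology B) evB \<and>
           cont_hom Om F evF (discrete_topology B) evB h \<and> h a \<noteq> h b)"
      using prof unfolding profinite_algebra_def by (elim conjE) assumption
    from P[rule_format, OF a1(1) a2(1) ne] obtain B0 evB0 k0 where
      "finite (B0 :: nat set)" "top_algebra Om (discrete_topology B0) evB0"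
      "cont_hom Om F evF (discrete_topology B0) evB0 k0" "k0 a1 \<noteq> k0 a2"
      by (elim exE conjE) (rule that)
    then show ?thesis by (rule that)
  qed
  have khom: "is_hom Om (topspace F) evF B evB k" and kc: "continuous_map F (discrete_topology B) k"
    using B(3) unfolding cont_hom_def by auto
  define uB where "uB y = evB n f0 (\<lambda>i\<in>{..<n}. y)" for y
  have kiter: "k ((u ^^ m) y) = (uB ^^ m) (k y)" if "y \<in> topspace F" for y m
    unfolding u_def uB_def by (rule hom_iter[OF khom n(2) that]) (rule ev_closed[OF taF n(2)])
  have kF: "k y \<in> B" if "y \<in> topspace F" for y
    using khom that unfolding is_hom_def by auto
  define \<beta> where "\<beta> = k a0"
  have orb: "(uB ^^ m) \<beta> \<in> B" for m
    using kiter[of a0 m] kF[OF uiF[OF a, of m]] a a0_def \<beta>_def by simp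
  define N where "N = card B"
  define e where "e = (uB ^^ fact N) \<beta>"
  have eB: "e \<in> B" using orb e_def by simp
  have Nle: "N \<le> fact N" by (rule fact_ge_self)
  have per: "(uB ^^ m') \<beta> = e" if "fact N \<le> m'" "fact N dvd m'" for m'
    unfolding e_def N_def
    by (rule fin_period[OF B(1) orb]) (use that Nle dvd_diff_nat[OF that(2) dvd_refl] in \<open>auto simp: N_def\<close>)
  have cloB: "closedin F {y \<in> topspace F. k y \<in> {e}}"
  proof -
    have "closedin (discrete_topology B) {e}" using eB by simp
    then show ?thesis by (rule closedin_continuous_map_preimage[OF kc])
  qed
  have k1: "a1 \<in> {y \<in> topspace F. k y \<in> {e}}"
  proof (rule cluster_prop[OF a1(2)[rule_format, of N] _ cloB])
    fix i assume i: "i \<ge> N"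
    have "k (s1 i) = (uB ^^ fact i) \<beta>" using kiter[OF a] a0_def \<beta>_def s1_def by simp
    also have "\<dots> = e" using i by (intro per) (auto intro: fact_mono fact_dvd)
    finally show "s1 i \<in> {y \<in> topspace F. k y \<in> {e}}" using s1F by simp
  qed
  have k2: "a2 \<in> {y \<in> topspace F. k y \<in> {e}}"
  proof (rule cluster_prop[OF a2(2)[rule_format, of N] _ cloB])
    fix i assume i: "i \<ge> N"
    have "k (s2 i) = (uB ^^ fact i) (k a1)" using kiter[OF a1(1)] s2_def by simp
    also have "\<dots> = (uB ^^ fact i) ((uB ^^ fact N) \<beta>)" using k1 e_def by simp
    also have "\<dots> = (uB ^^ (fact i + fact N)) \<beta>" by (simp add: funpow_add)
    also have "\<dots> = e" using i by (intro per) (auto intro: fact_mono fact_dvd)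
    finally show "s2 i \<in> {y \<in> topspace F. k y \<in> {e}}" using s2F by simp
  qed
  show False using k1 k2 B(4) by simp
qed

end
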